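(* Let $\mathcal{G}$ be a graph on the vertex set $\{1,2,\ldots,d\}$, let $w(\mathcal{G})$ denote its treewidth, and let $\alpha$ be a real scalar. Suppose that: (i) $\mathcal{G}$ is chordal; (ii) $w(\mathcal{G})\leq \frac{2}{3}(d-1)$; (iii) $\alpha<\dfrac{1}{w(\mathcal{G})\sqrt{d-w(\mathcal{G})-1}+w(\mathcal{G})-1}$. Then $$\beta(\mathcal{G},\alpha)\leq\frac{w(\mathcal{G})\sqrt{d-w(\mathcal{G})-1}\;\alpha^2}{1-(w(\mathcal{G})-1)\,\alpha}.$$
   Context: A graph is chordal if it contains no induced cycle of length greater than three. For a chordal graph, $w(\mathcal{G})$ (treewidth) is the number of vertices of a largest clique of $\mathcal{G}$ minus one. For a symmetric matrix $M\in\mathbb{S}^d$, its support graph $\mathrm{supp}(M)$ is the graph on $\{1,\ldots,d\}$ with an edge $\{i,j\}$, $i\neq j$, iff $M_{ij}\neq 0$; $(\mathrm{supp}(M))^{(c)}$ denotes the complement graph. $\|M\|_{\max}=\max_{i\neq j}|M_{ij}|$ (maximum absolute off-diagonal entry). A matrix $M\in\mathbb{S}^d$ is called inverse-consistent if there exists $N\in\mathbb{S}^d$ with zero diagonal such that $M+N\succ 0$, $\mathrm{supp}(N)\subseteq(\mathrm{supp}(M))^{(c)}$, and $\mathrm{supp}((M+N)^{-1})\subseteq\mathrm{supp}(M)$; such $N$ is called an inverse-consistent complement of $M$ and denoted $M^{(c)}$ (every positive definite matrix has a unique inverse-consistent complement). Given a graph $\mathcal{G}$ and scalar $\alpha$,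 $\beta(\mathcal{G},\alpha)$ is defined as the maximum of $\|M^{(c)}\|_{\max}$ over all inverse-consistent positive definite matrices $M$ with all diagonal entries equal to $1$ such that $\mathrm{supp}(M)=\mathcal{G}$ and $\|M\|_{\max}\leq\alpha$. *)

theory Defs
  imports "HOL-Analysis.Analysis"
begin

text \<open>Graphs on the finite vertex type 'n (d = CARD('n)), given by an adjacency relation.\<close>

definition simple_graph :: "('n \<Rightarrow> 'n \<Rightarrow> bool) \<Rightarrow> bool" where
  "simple_graph E \<longleftrightarrow> (\<forall>i j. E i j \<longrightarrow> E j i) \<and> (\<forall>i. \<not> E i i)"

definition induced_cycle :: "('n \<Rightarrow> 'n \<Rightarrow> bool) \<Rightarrow> nat \<Rightarrow> (nat \<Rightarrow> 'n) \<Rightarrow> bool" where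
  "induced_cycle E k f \<longleftrightarrow> k \<ge> 3 \<and> inj_on f {..<k} \<and>
     (\<forall>i<k. \<forall>j<k. E (f i) (f j) \<longleftrightarrow> (j = (i + 1) mod k \<or> i = (j + 1) mod k))"

definition chordal :: "('n \<Rightarrow> 'n \<Rightarrow> bool) \<Rightarrow> bool" where
  "chordal E \<longleftrightarrow> \<not> (\<exists>k f. k > 3 \<and> induced_cycle E k f)"

definition is_clique :: "('n \<Rightarrow> 'n \<Rightarrow> bool) \<Rightarrow> 'n set \<Rightarrow> bool" where
  "is_clique E C \<longleftrightarrow> (\<forall>i\<in>C. \<forall>j\<in>C. i \<noteq> j \<longrightarrow> E i j)"

text \<open>Treewidth of a chordal graph: size of a largest clique minus one.\<close>
definition treewidth :: "('n::finite \<Rightarrow> 'n \<Rightarrow> bool) \<Rightarrow> nat" where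
  "treewidth E = Max {card C | C. is_clique E C} - 1"

definition sym_mat :: "real^'n^'n \<Rightarrow> bool" where
  "sym_mat M \<longleftrightarrow> transpose M = M"

definition pos_def :: "real^'n^'n \<Rightarrow> bool" where
  "pos_def M \<longleftrightarrow> sym_mat M \<and> (\<forall>x. x \<noteq> 0 \<longrightarrow> x \<bullet> (M *v x) > 0)"

definition supp_eq :: "real^'n^'n \<Rightarrow> ('n \<Rightarrow> 'n \<Rightarrow> bool) \<Rightarrow> bool" where
  "supp_eq M E \<longleftrightarrow> (\<forall>i j. i \<noteq> j \<longrightarrow> (M $ i $ j \<noteq> 0 \<longleftrightarrow> E i j))"

definition max_norm :: "real^'n::finite^'n \<Rightarrow> real" where
  "max_norm M = Max (insert 0 {\<bar>M $ i $ j\<bar> | i j. i \<noteq> j})"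

definition ic_complement :: "real^'n^'n \<Rightarrow> real^'n^'n \<Rightarrow> bool" where
  "ic_complement M N \<longleftrightarrow> sym_mat N \<and> (\<forall>i. N $ i $ i = 0) \<and> pos_def (M + N) \<and>
     (\<forall>i j. i \<noteq> j \<longrightarrow> N $ i $ j \<noteq> 0 \<longrightarrow> M $ i $ j = 0) \<and>
     (\<forall>i j. i \<noteq> j \<longrightarrow> matrix_inv (M + N) $ i $ j \<noteq> 0 \<longrightarrow> M $ i $ j \<noteq> 0)"

definition inverse_consistent :: "real^'n^'n \<Rightarrow> bool" where
  "inverse_consistent M \<longleftrightarrow> sym_mat M \<and> (\<exists>N. ic_complement M N)"

text \<open>The set whose maximum is beta(G, alpha).\<close>
definition beta_vals :: "('n::finite \<Rightarrow> 'n \<Rightarrow> bool) \<Rightarrow> real \<Rightarrow> real set" where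
  "beta_vals E \<alpha> = {max_norm N | M N. inverse_consistent M \<and> pos_def M \<and> (\<forall>i. M $ i $ i = 1)
      \<and> supp_eq M E \<and> max_norm M \<le> \<alpha> \<and> ic_complement M N}"

end

theory Submission
  imports Defs
begin


definition good_path :: "('n \<Rightarrow> 'n \<Rightarrow> bool) \<Rightarrow> 'n set \<Rightarrow> 'n \<Rightarrow> 'n \<Rightarrow> (nat \<Rightarrow> 'n) \<Rightarrow> nat \<Rightarrow> bool" where
  "good_path E C s1 s2 p n \<longleftrightarrow> p 0 = s1 \<and> p n = s2 \<and> (\<forall>i. 0 < i \<and> i < n \<longrightarrow> p i \<in> C)
     \<and> (\<forall>i<n. E (p i) (p (Suc i)))"

lemma shortcut:
  assumes g: "good_path E C s1 s2 p n" and ij: "i + 1 < j" "j \<le> n" and e: "E (p i) (p j)"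
  shows "good_path E C s1 s2 (\<lambda>t. if t \<le> i then p t else p (t + (j - i - 1))) (n - (j - i - 1))"
  using g ij e unfolding good_path_def
  apply (intro conjI allI impI)
  apply simp
  apply (simp add: not_le)
  subgoal for t by (cases "t \<le> i") auto
  subgoal for t
    apply (cases "t < i")
     apply simp
    apply (cases "t = i")
     apply (simp add: not_le)
    by (simp add: not_le)
  done

lemma min_path:
  assumes g: "good_path E C s1 s2 p n"
    and minl: "\<And>p' n'. good_path E C s1 s2 p' n' \<Longrightarrow> n \<le> n'"
  shows "\<And>i j. i + 1 < j \<Longrightarrow> j \<le> n \<Longrightarrow> \<not> E (p i) (p j)"
proof -
  fix i j assume ij: "i + 1 < j" "j \<le> n"
  show "\<not> E (p i) (p j)"
  proof
    assume "E (p i) (p j)"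
    from minl[OF shortcut[OF g ij this]] ij show False by simp
  qed
qed

lemma min_path_inj:
  assumes g: "good_path E C s1 s2 p n"
    and minl: "\<And>p' n'. good_path E C s1 s2 p' n' \<Longrightarrow> n \<le> n'"
    and ne: "s1 \<noteq> s2"
    and ij: "i < j" "j \<le> n"
  shows "p i \<noteq> p j"
proof
  assume eq: "p i = p j"
  note m = min_path[OF g minl]
  have st: "\<And>t. t < n \<Longrightarrow> E (p t) (p (Suc t))" using g unfolding good_path_def by auto
  show False
  proof (cases "j < n")
    case True
    have "E (p i) (p (j+1))" using st[OF True] eq by simp
    with m[where i=i and j="j+1"] ij True show False by simp
  next
    case False
    hence jn: "j = n" using ij by simp
    show False
    proof (cases "i = 0")
      case True
      then show False using g eq jn ne unfolding good_path_def by simp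
    next
      case False
      hence "E (p (i - 1)) (p j)" using st[of "i - 1"] eq ij by simp
      with m[where i="i - 1" and j=j] ij False show False by simp
    qed
  qed
qed

lemma mod_suc_lt: "i < (k::nat) \<Longrightarrow> (i + 1) mod k = (if i + 1 = k then 0 else i + 1)"
  by auto

lemma cycle_false:
  assumes sym: "\<forall>i j. E i j \<longrightarrow> E j i" and irr: "\<forall>i. \<not> E i i" and ch: "chordal E"
    and as1: "E a s1" and as2: "E a s2" and n12: "\<not> E s1 s2" and ne: "s1 \<noteq> s2"
    and aC: "\<forall>c\<in>C. \<not> E a c \<and> c \<noteq> a" and s1C: "s1 \<notin> C" and s2C: "s2 \<notin> C"
    and g: "good_path E C s1 s2 p n"
  shows False
proof -
  define n0 where "n0 = (LEAST n. \<exists>p. good_path E C s1 s2 p n)"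
  have "\<exists>p. good_path E C s1 s2 p n0" unfolding n0_def by (rule LeastI_ex) (use g in blast)
  then obtain q where q: "good_path E C s1 s2 q n0" by blast
  have minl: "\<And>p' n'. good_path E C s1 s2 p' n' \<Longrightarrow> n0 \<le> n'"
    unfolding n0_def by (rule Least_le) blast
  have q0: "q 0 = s1" and qn: "q n0 = s2" and qC: "\<And>i. 0 < i \<Longrightarrow> i < n0 \<Longrightarrow> q i \<in> C"
    and qs: "\<And>i. i < n0 \<Longrightarrow> E (q i) (q (Suc i))" using q unfolding good_path_def by auto
  have n0ge: "n0 \<ge> 2"
  proof (rule ccontr)
    assume "\<not> n0 \<ge> 2"
    hence "n0 = 0 \<or> n0 = 1" by auto
    thus False using q0 qn qs[of 0] ne n12 by auto
  qed
  have Ea: "\<And>t. t \<le> n0 \<Longrightarrow> E a (q t) \<longleftrightarrow> (t = 0 \<or> t = n0)"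
  proof -
    fix t assume t: "t \<le> n0"
    show "E a (q t) \<longleftrightarrow> (t = 0 \<or> t = n0)"
    proof (cases "t = 0 \<or> t = n0")
      case True then show ?thesis using q0 qn as1 as2 by auto
    next
      case False then have "q t \<in> C" using qC t by auto
      then show ?thesis using aC False by auto
    qed
  qed
  have qa: "\<And>t. t \<le> n0 \<Longrightarrow> q t \<noteq> a"
  proof -
    fix t assume t: "t \<le> n0"
    show "q t \<noteq> a"
    proof (cases "t = 0 \<or> t = n0")
      case True then show ?thesis using q0 qn as1 as2 irr by auto
    next
      case False then have "q t \<in> C" using qC t by auto
      then show ?thesis using aC by auto
    qed
  qed
  have Eq: "\<And>i j. i \<le> n0 \<Longrightarrow> j \<le> n0 \<Longrightarrow> E (q i) (q j) \<longleftrightarrow> (j = i + 1 \<or> i = j + 1)"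
  proof -
    fix i j assume ij: "i \<le> n0" "j \<le> n0"
    have A: "\<And>i j. i < j \<Longrightarrow> j \<le> n0 \<Longrightarrow> E (q i) (q j) \<longleftrightarrow> j = i + 1"
    proof -
      fix i j assume "i < j" "j \<le> n0"
      then show "E (q i) (q j) \<longleftrightarrow> j = i + 1"
        using min_path[OF q minl, where i=i and j=j] qs[of i] by (cases "j = i + 1") auto
    qed
    show "E (q i) (q j) \<longleftrightarrow> (j = i + 1 \<or> i = j + 1)"
    proof (cases i j rule: linorder_cases)
      case less then show ?thesis using A[of i j] ij by auto
    next
      case equal then show ?thesis using irr by auto
    next
      case greater then show ?thesis using A[of j i] ij sym by auto
    qed
  qed
  have qneq: "q i \<noteq> q j" if "i < j" "j \<le> n0" for i j
    apply (rule min_path_inj[where p=q and n=n0])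
    using q minl ne that by auto
  have qinj: "\<And>i j. i \<le> n0 \<Longrightarrow> j \<le> n0 \<Longrightarrow> q i = q j \<Longrightarrow> i = j"
    using qneq by (metis linorder_neqE_nat)
  define k where "k = n0 + 2"
  define f where "f t = (if t = 0 then a else q (t - 1))" for t
  have "induced_cycle E k f"
    unfolding induced_cycle_def
  proof (intro conjI allI impI)
    show "3 \<le> k" using n0ge k_def by simp
    show "inj_on f {..<k}"
    proof (rule inj_onI)
      fix x y assume "x \<in> {..<k}" "y \<in> {..<k}" "f x = f y"
      then show "x = y" unfolding f_def k_def
        using qa qinj by (auto split: if_splits) (metis Suc_pred less_Suc_eq_le add_2_eq_Suc' not_less_eq diff_le_mono)+
    qed
    fix i j assume i: "i < k" and j: "j < k"
    show "E (f i) (f j) \<longleftrightarrow> (j = (i + 1) mod k \<or> i = (j + 1) mod k)"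
      unfolding mod_suc_lt[OF i] mod_suc_lt[OF j]
    proof (cases "i = 0"; cases "j = 0")
      assume "i = 0" "j = 0" then show "E (f i) (f j) \<longleftrightarrow> (j = (if i + 1 = k then 0 else i + 1) \<or> i = (if j + 1 = k then 0 else j + 1))"
        using irr k_def by (simp add: f_def)
    next
      assume "i = 0" "j \<noteq> 0" then show "E (f i) (f j) \<longleftrightarrow> (j = (if i + 1 = k then 0 else i + 1) \<or> i = (if j + 1 = k then 0 else j + 1))"
        using Ea[of "j - 1"] j k_def by (auto simp add: f_def)
    next
      assume "i \<noteq> 0" "j = 0" then show "E (f i) (f j) \<longleftrightarrow> (j = (if i + 1 = k then 0 else i + 1) \<or> i = (if j + 1 = k then 0 else j + 1))"
        using Ea[of "i - 1"] i k_def sym[rule_format, of "q (i - 1)" a] sym[rule_format, of a "q (i - 1)"] by (auto simp add: f_def)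
    next
      assume "i \<noteq> 0" "j \<noteq> 0" then show "E (f i) (f j) \<longleftrightarrow> (j = (if i + 1 = k then 0 else i + 1) \<or> i = (if j + 1 = k then 0 else j + 1))"
        using Eq[of "i - 1" "j - 1"] i j k_def by (auto simp add: f_def)
    qed
  qed
  moreover have "k > 3" using n0ge k_def by simp
  ultimately show False using ch unfolding chordal_def by blast
qed

definition simp_in :: "('n \<Rightarrow> 'n \<Rightarrow> bool) \<Rightarrow> 'n set \<Rightarrow> 'n \<Rightarrow> bool" where
  "simp_in E U v \<longleftrightarrow> v \<in> U \<and> (\<forall>x\<in>U. \<forall>y\<in>U. E v x \<longrightarrow> E v y \<longrightarrow> x \<noteq> y \<longrightarrow> E x y)"

lemma rtranclp_path:
  assumes "R\<^sup>*\<^sup>* x y"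
  shows "\<exists>n p. p 0 = x \<and> p n = y \<and> (\<forall>i<n. R (p i) (p (Suc i)))"
  using assms
proof (induction rule: rtranclp_induct)
  case base
  then show ?case by (intro exI[of _ 0] exI[of _ "\<lambda>_. x"]) simp
next
  case (step y z)
  then obtain n p where p: "p 0 = x" "p n = y" "\<forall>i<n. R (p i) (p (Suc i))" by blast
  show ?case
    apply (intro exI[of _ "Suc n"] exI[of _ "p(Suc n := z)"])
    using p step.hyps(2) by (auto simp: less_Suc_eq)
qed

lemma rtranclp_sym:
  assumes "\<forall>x y. R x y \<longrightarrow> R y x" and "R\<^sup>*\<^sup>* x y"
  shows "R\<^sup>*\<^sup>* y x"
  using assms(2)
proof (induction rule: rtranclp_induct)
  case base then show ?case by simp
next
  case (step y z)
  then show ?case using assms(1) by (meson converse_rtranclp_into_rtranclp)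
qed

lemma dirac_step:
  fixes E :: "'n::finite \<Rightarrow> 'n \<Rightarrow> bool" and U :: "'n set"
  assumes sym: "\<forall>i j. E i j \<longrightarrow> E j i" and irr: "\<forall>i. \<not> E i i" and ch: "chordal E"
    and IH: "\<And>W. card W < card U \<Longrightarrow> is_clique E W \<or> (\<exists>v1 v2. simp_in E W v1 \<and> simp_in E W v2 \<and> v1 \<noteq> v2 \<and> \<not> E v1 v2)"
    and aU: "a \<in> U" and bU: "b \<in> U" and ba: "b \<noteq> a" and nab: "\<not> E a b"
  shows "\<exists>v. simp_in E U v \<and> v \<noteq> a \<and> \<not> E a v"
proof -
  define D where "D = {x\<in>U. x \<noteq> a \<and> \<not> E a x}"
  define R where "R x y \<longleftrightarrow> E x y \<and> x \<in> D \<and> y \<in> D" for x y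
  define C where "C = {x. R\<^sup>*\<^sup>* b x}"
  define S where "S = {s\<in>U. s \<notin> C \<and> (\<exists>c\<in>C. E s c)}"
  define W where "W = C \<union> S"
  have bD: "b \<in> D" using bU ba nab D_def by auto
  have bC: "b \<in> C" unfolding C_def by simp
  have CD: "C \<subseteq> D"
  proof
    fix x assume "x \<in> C"
    hence "R\<^sup>*\<^sup>* b x" unfolding C_def by simp
    then show "x \<in> D" by (induction rule: rtranclp_induct) (use bD R_def in auto)
  qed
  have Rsym: "\<forall>x y. R x y \<longrightarrow> R y x" using sym R_def by auto
  have Cclosed: "\<And>c x. c \<in> C \<Longrightarrow> x \<in> D \<Longrightarrow> E c x \<Longrightarrow> x \<in> C"
  proof -
    fix c x assume "c \<in> C" "x \<in> D" "E c x"
    then have "R c x" using CD R_def by auto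
    with \<open>c \<in> C\<close> show "x \<in> C" unfolding C_def by (simp add: rtranclp.rtrancl_into_rtrancl)
  qed
  have SaN: "\<And>s. s \<in> S \<Longrightarrow> E a s"
  proof -
    fix s assume s: "s \<in> S"
    then obtain c where c: "c \<in> C" "E s c" and sU: "s \<in> U" and sC: "s \<notin> C" unfolding S_def by auto
    have "s \<notin> D" using Cclosed[OF c(1)] sym c(2) sC by blast
    moreover have "s \<noteq> a" using c CD D_def by auto
    ultimately show "E a s" using sU D_def by auto
  qed
  have WU: "W \<subseteq> U" using CD D_def S_def W_def by auto
  have aW: "a \<notin> W" using CD D_def SaN irr W_def by auto
  have cardW: "card W < card U"
  proof -
    have "W \<subset> U" using WU aW aU by blast
    then show ?thesis by (rule psubset_card_mono[OF finite])
  qed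
  have nbhW: "\<And>c x. c \<in> C \<Longrightarrow> x \<in> U \<Longrightarrow> E c x \<Longrightarrow> x \<in> W"
    unfolding W_def S_def using sym by blast
  have Sclique: "\<And>s1 s2. s1 \<in> S \<Longrightarrow> s2 \<in> S \<Longrightarrow> s1 \<noteq> s2 \<Longrightarrow> E s1 s2"
  proof (rule ccontr)
    fix s1 s2 assume s1: "s1 \<in> S" and s2: "s2 \<in> S" and ne: "s1 \<noteq> s2" and n12: "\<not> E s1 s2"
    obtain c1 where c1: "c1 \<in> C" "E s1 c1" using s1 S_def by auto
    obtain c2 where c2: "c2 \<in> C" "E s2 c2" using s2 S_def by auto
    have "R\<^sup>*\<^sup>* c1 b" using rtranclp_sym[OF Rsym] c1(1) C_def by auto
    moreover have "R\<^sup>*\<^sup>* b c2" using c2(1) C_def by auto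
    ultimately have "R\<^sup>*\<^sup>* c1 c2" by simp
    then obtain n p where p: "p 0 = c1" "p n = c2" "\<forall>i<n. R (p i) (p (Suc i))"
      using rtranclp_path by metis
    have pC: "\<And>i. i \<le> n \<Longrightarrow> p i \<in> C"
    proof -
      fix i show "i \<le> n \<Longrightarrow> p i \<in> C"
      proof (induction i)
        case 0 then show ?case using p c1 by simp
      next
        case (Suc i)
        then have "R (p i) (p (Suc i))" using p by simp
        then show ?case using Suc Cclosed R_def by auto
      qed
    qed
    define pp where "pp t = (if t = 0 then s1 else if t \<le> n + 1 then p (t - 1) else s2)" for t
    have "good_path E C s1 s2 pp (n + 2)"
      unfolding good_path_def
    proof (intro conjI allI impI)
      show "pp 0 = s1" by (simp add: pp_def)
      show "pp (n + 2) = s2" by (simp add: pp_def)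
      fix i
      show "0 < i \<and> i < n + 2 \<Longrightarrow> pp i \<in> C" using pC by (auto simp: pp_def)
      assume i: "i < n + 2"
      show "E (pp i) (pp (Suc i))"
      proof (cases "i = 0")
        case True then show ?thesis using p c1 by (simp add: pp_def)
      next
        case False
        show ?thesis
        proof (cases "i = n + 1")
          case True then show ?thesis using p c2 sym False by (auto simp: pp_def)
        next
          case False2: False
          have i1: "i - 1 < n" using False False2 i by arith
          have "R (p (i - 1)) (p (Suc (i - 1)))" using p(3) i1 by blast
          then have "R (p (i - 1)) (p i)" using False by simp
          then show ?thesis using False False2 i R_def by (auto simp: pp_def)
        qed
      qed
    qed
    moreover have "\<forall>c\<in>C. \<not> E a c \<and> c \<noteq> a" using CD D_def by auto
    moreover have "s1 \<notin> C" "s2 \<notin> C" using s1 s2 S_def by auto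
    ultimately show False
      by (intro cycle_false[OF sym irr ch SaN[OF s1] SaN[OF s2] n12 ne]) auto
  qed
  show ?thesis
  proof (cases "is_clique E W")
    case True
    have "simp_in E U b" unfolding simp_in_def
    proof (intro conjI ballI impI)
      show "b \<in> U" by (rule bU)
      fix x y assume "x \<in> U" "y \<in> U" "E b x" "E b y" "x \<noteq> y"
      then have "x \<in> W" "y \<in> W" using nbhW[OF bC] by auto
      then show "E x y" using True \<open>x \<noteq> y\<close> unfolding is_clique_def by blast
    qed
    then show ?thesis using ba nab by blast
  next
    case False
    then obtain v1 v2 where v: "simp_in E W v1" "simp_in E W v2" "v1 \<noteq> v2" "\<not> E v1 v2"
      using IH[OF cardW] by blast
    have "\<exists>v. v \<in> C \<and> simp_in E W v"
    proof (rule ccontr)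
      assume "\<not> ?thesis"
      then have "v1 \<notin> C" "v2 \<notin> C" using v by auto
      moreover have "v1 \<in> W" "v2 \<in> W" using v(1,2) unfolding simp_in_def by auto
      ultimately have "v1 \<in> S" "v2 \<in> S" unfolding W_def by auto
      then show False using Sclique v by blast
    qed
    then obtain v where vC: "v \<in> C" and vs: "simp_in E W v" by blast
    have "simp_in E U v" unfolding simp_in_def
    proof (intro conjI ballI impI)
      show "v \<in> U" using vs WU unfolding simp_in_def by auto
      fix x y assume "x \<in> U" "y \<in> U" "E v x" "E v y" "x \<noteq> y"
      then have "x \<in> W" "y \<in> W" using nbhW[OF vC] by auto
      then show "E x y" using vs \<open>E v x\<close> \<open>E v y\<close> \<open>x \<noteq> y\<close> unfolding simp_in_def by blast
    qed
    moreover have "v \<noteq> a" "\<not> E a v" using vC CD D_def by auto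
    ultimately show ?thesis by blast
  qed
qed

lemma dirac:
  fixes E :: "'n::finite \<Rightarrow> 'n \<Rightarrow> bool" and U :: "'n set"
  assumes sym: "\<forall>i j. E i j \<longrightarrow> E j i" and irr: "\<forall>i. \<not> E i i" and ch: "chordal E"
  shows "is_clique E U \<or> (\<exists>v1 v2. simp_in E U v1 \<and> simp_in E U v2 \<and> v1 \<noteq> v2 \<and> \<not> E v1 v2)"
proof (induction "card U" arbitrary: U rule: less_induct)
  case less
  show ?case
  proof (cases "is_clique E U")
    case True then show ?thesis by simp
  next
    case False
    then obtain a b where ab: "a \<in> U" "b \<in> U" "a \<noteq> b" "\<not> E a b" unfolding is_clique_def by blast
    obtain v1 where v1: "simp_in E U v1" "v1 \<noteq> a" "\<not> E a v1"
      using dirac_step[OF sym irr ch less.hyps ab(1,2)] ab(3,4) by metis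
    have v1U: "v1 \<in> U" using v1(1) simp_in_def by metis
    have "\<not> E v1 a" using v1(3) sym by blast
    then obtain v2 where v2: "simp_in E U v2" "v2 \<noteq> v1" "\<not> E v1 v2"
      using dirac_step[OF sym irr ch less.hyps v1U ab(1)] v1(2) by metis
    then show ?thesis using v1 by blast
  qed
qed

lemma simplicial_exists:
  fixes E :: "'n::finite \<Rightarrow> 'n \<Rightarrow> bool" and U :: "'n set"
  assumes sym: "\<forall>i j. E i j \<longrightarrow> E j i" and irr: "\<forall>i. \<not> E i i" and ch: "chordal E"
    and ne: "U \<noteq> {}"
  shows "\<exists>v. simp_in E U v"
proof (cases "is_clique E U")
  case True
  obtain v where "v \<in> U" using ne by blast
  then have "simp_in E U v" using True unfolding simp_in_def is_clique_def by blast
  then show ?thesis by blast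
next
  case False then show ?thesis using dirac[OF sym irr ch, of U] by blast
qed



lemma dd:
  fixes A :: "'n \<Rightarrow> 'n \<Rightarrow> real" and z :: "'n \<Rightarrow> real"
  assumes fin: "finite C" and off: "\<forall>c\<in>C. \<forall>k\<in>C. c \<noteq> k \<longrightarrow> \<bar>A c k\<bar> \<le> \<alpha>"
    and diag: "\<forall>k\<in>C. A k k = 1" and a0: "\<alpha> \<ge> 0"
    and lam: "0 < 1 - (real (card C) - 1) * \<alpha>"
    and eq: "\<forall>k\<in>C. \<bar>\<Sum>c\<in>C. z c * A c k\<bar> \<le> \<beta>"
  shows "\<forall>c\<in>C. \<bar>z c\<bar> * (1 - (real (card C) - 1) * \<alpha>) \<le> \<beta>"
proof (cases "C = {}")
  case True then show ?thesis by simp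
next
  case False
  define m where "m = Max ((\<lambda>c. \<bar>z c\<bar>) ` C)"
  have "m \<in> (\<lambda>c. \<bar>z c\<bar>) ` C" unfolding m_def using fin False by (intro Max_in) auto
  then obtain c0 where c0: "c0 \<in> C" "\<bar>z c0\<bar> = m" by auto
  have mx: "\<And>c. c \<in> C \<Longrightarrow> \<bar>z c\<bar> \<le> \<bar>z c0\<bar>" unfolding c0(2) m_def using fin by (intro Max_ge) auto
  have spl: "(\<Sum>c\<in>C. z c * A c c0) = z c0 + (\<Sum>c\<in>C-{c0}. z c * A c c0)"
    using sum.remove[OF fin c0(1), of "\<lambda>c. z c * A c c0"] diag c0 by simp
  have "\<bar>\<Sum>c\<in>C-{c0}. z c * A c c0\<bar> \<le> (\<Sum>c\<in>C-{c0}. \<bar>z c * A c c0\<bar>)" by (rule sum_abs)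
  also have "\<dots> \<le> (\<Sum>c\<in>C-{c0}. \<bar>z c0\<bar> * \<alpha>)"
  proof (rule sum_mono)
    fix c assume c: "c \<in> C - {c0}"
    have "\<bar>z c * A c c0\<bar> = \<bar>z c\<bar> * \<bar>A c c0\<bar>" by (simp add: abs_mult)
    also have "\<dots> \<le> \<bar>z c0\<bar> * \<alpha>" using mx[of c] off c c0 by (intro mult_mono) auto
    finally show "\<bar>z c * A c c0\<bar> \<le> \<bar>z c0\<bar> * \<alpha>" .
  qed
  also have "\<dots> = (real (card C) - 1) * \<bar>z c0\<bar> * \<alpha>"
    using fin c0(1) False by (simp add: card_Diff_singleton Suc_leI card_gt_0_iff of_nat_diff)
  finally have rest: "\<bar>\<Sum>c\<in>C-{c0}. z c * A c c0\<bar> \<le> (real (card C) - 1) * \<bar>z c0\<bar> * \<alpha>" .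
  have "\<bar>z c0\<bar> \<le> \<bar>\<Sum>c\<in>C. z c * A c c0\<bar> + \<bar>\<Sum>c\<in>C-{c0}. z c * A c c0\<bar>"
    unfolding spl by linarith
  also have "\<dots> \<le> \<beta> + (real (card C) - 1) * \<bar>z c0\<bar> * \<alpha>" using eq c0(1) rest by auto
  finally have main: "\<bar>z c0\<bar> * (1 - (real (card C) - 1) * \<alpha>) \<le> \<beta>" by (simp add: algebra_simps)
  show ?thesis
  proof
    fix c assume "c \<in> C"
    then have "\<bar>z c\<bar> * (1 - (real (card C) - 1) * \<alpha>) \<le> \<bar>z c0\<bar> * (1 - (real (card C) - 1) * \<alpha>)"
      using mx lam by (intro mult_right_mono) auto
    then show "\<bar>z c\<bar> * (1 - (real (card C) - 1) * \<alpha>) \<le> \<beta>" using main by linarith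
  qed
qed

lemma main_ind:
  fixes E :: "'n::finite \<Rightarrow> 'n \<Rightarrow> bool" and X Y :: "'n \<Rightarrow> 'n \<Rightarrow> real" and U :: "'n set"
  assumes sym: "\<forall>i j. E i j \<longrightarrow> E j i" and irr: "\<forall>i. \<not> E i i" and ch: "chordal E"
    and diag: "\<forall>i. X i i = 1" and Xsym: "\<forall>i j. X i j = X j i"
    and edge: "\<forall>i j. i \<noteq> j \<longrightarrow> E i j \<longrightarrow> \<bar>X i j\<bar> \<le> \<alpha>"
    and cl: "\<forall>K. is_clique E K \<longrightarrow> card K \<le> w + 1"
    and a0: "\<alpha> \<ge> 0" and wa: "real w * \<alpha> < 1 - (real w - 1) * \<alpha>"
    and inv: "\<forall>i\<in>U. \<forall>k\<in>U. (\<Sum>l\<in>U. Y i l * X l k) = (if i = k then 1 else 0)"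
    and supp: "\<forall>i\<in>U. \<forall>l\<in>U. i \<noteq> l \<longrightarrow> Y i l \<noteq> 0 \<longrightarrow> E i l"
  shows "\<forall>i\<in>U. \<forall>j\<in>U. i \<noteq> j \<longrightarrow> \<not> E i j \<longrightarrow> \<bar>X i j\<bar> \<le> real w * \<alpha>\<^sup>2 / (1 - (real w - 1) * \<alpha>)"
  using inv supp
proof (induction "card U" arbitrary: U Y rule: less_induct)
  case less
  define lam where "lam = 1 - (real w - 1) * \<alpha>"
  define \<gamma> where "\<gamma> = real w * \<alpha>\<^sup>2 / lam"
  have lam_pos: "lam > 0" using wa a0 lam_def by (smt (verit) mult_nonneg_nonneg of_nat_0_le_iff)
  have gam_le: "\<gamma> \<le> \<alpha>"
  proof -
    have "real w * \<alpha> * \<alpha> \<le> lam * \<alpha>" using wa a0 lam_def by (intro mult_right_mono) auto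
    then show ?thesis unfolding \<gamma>_def using lam_pos by (simp add: divide_le_eq power2_eq_square mult.commute mult.left_commute)
  qed
  show ?case
  proof (cases "U = {}")
    case True then show ?thesis by simp
  next
    case False
    obtain v where vs: "simp_in E U v" using simplicial_exists[OF sym irr ch False] by blast
    have vU: "v \<in> U" using vs simp_in_def by metis
    define C where "C = {c\<in>U. E v c}"
    define U' where "U' = U - {v}"
    have CU: "C \<subseteq> U'" unfolding C_def U'_def using irr by auto
    have Ccl: "\<And>c k. c \<in> C \<Longrightarrow> k \<in> C \<Longrightarrow> c \<noteq> k \<Longrightarrow> E c k"
    proof -
      fix c k assume "c \<in> C" "k \<in> C" "c \<noteq> k"
      then have "c \<in> U" "k \<in> U" "E v c" "E v k" "c \<noteq> k" unfolding C_def by auto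
      then show "E c k" using vs unfolding simp_in_def by blast
    qed
    have "is_clique E (insert v C)" unfolding is_clique_def
    proof (intro ballI impI)
      fix x y assume x: "x \<in> insert v C" and y: "y \<in> insert v C" and xy: "x \<noteq> y"
      show "E x y"
      proof (cases "x = v")
        case True then show ?thesis using y xy C_def by auto
      next
        case False
        then have xC: "x \<in> C" using x by auto
        show ?thesis
        proof (cases "y = v")
          case True then show ?thesis using xC C_def sym by auto
        next
          case False then show ?thesis using xC y xy Ccl by auto
        qed
      qed
    qed
    then have "card (insert v C) \<le> w + 1" using cl by blast
    moreover have "v \<notin> C" using irr C_def by auto
    ultimately have cardC: "card C \<le> w" by (simp add: card_insert_disjoint)
    define lamC where "lamC = 1 - (real (card C) - 1) * \<alpha>"
    have lamC_ge: "lam \<le> lamC" unfolding lam_def lamC_def using cardC a0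
      by (intro diff_left_mono mult_right_mono) auto
    have lamC_pos: "lamC > 0" using lamC_ge lam_pos by simp
    have offC: "\<forall>c\<in>C. \<forall>k\<in>C. c \<noteq> k \<longrightarrow> \<bar>X c k\<bar> \<le> \<alpha>" using Ccl edge by blast
    have diagC: "\<forall>k\<in>C. X k k = 1" using diag by simp
    have rowv: "\<And>k. (\<Sum>l\<in>U. Y v l * X l k) = Y v v * X v k + (\<Sum>c\<in>C. Y v c * X c k)"
    proof -
      fix k
      have "(\<Sum>l\<in>U. Y v l * X l k) = Y v v * X v k + (\<Sum>l\<in>U'. Y v l * X l k)"
        unfolding U'_def using sum.remove[OF finite vU] by simp
      moreover have "(\<Sum>l\<in>U'. Y v l * X l k) = (\<Sum>c\<in>C. Y v c * X c k)"
      proof (rule sum.mono_neutral_right[OF finite CU])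
        show "\<forall>l\<in>U' - C. Y v l * X l k = 0"
          using less.prems(2) vU unfolding U'_def C_def by auto
      qed
      ultimately show "(\<Sum>l\<in>U. Y v l * X l k) = Y v v * X v k + (\<Sum>c\<in>C. Y v c * X c k)" by simp
    qed
    have Cv: "\<And>k. k \<in> C \<Longrightarrow> k \<in> U \<and> k \<noteq> v" using CU U'_def by auto
    have Yvv: "Y v v \<noteq> 0"
    proof
      assume Y0: "Y v v = 0"
      have "\<forall>k\<in>C. \<bar>\<Sum>c\<in>C. Y v c * X c k\<bar> \<le> 0"
      proof
        fix k assume kC: "k \<in> C"
        have kv: "k \<in> U" "v \<noteq> k" using Cv[OF kC] by auto
        have "(\<Sum>l\<in>U. Y v l * X l k) = (if v = k then 1 else 0)" using less.prems(1) vU kv(1) by blast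
        then have "(\<Sum>l\<in>U. Y v l * X l k) = 0" using kv(2) by simp
        then show "\<bar>\<Sum>c\<in>C. Y v c * X c k\<bar> \<le> 0" using rowv[of k] Y0 by simp
      qed
      from dd[OF finite offC diagC a0 lamC_pos[unfolded lamC_def] this]
      have h: "\<forall>c\<in>C. \<bar>Y v c\<bar> * lamC \<le> 0" unfolding lamC_def .
      have z: "\<forall>c\<in>C. Y v c = 0"
      proof
        fix c assume "c \<in> C"
        then have "\<bar>Y v c\<bar> * lamC \<le> 0" using h by blast
        then show "Y v c = 0" using lamC_pos by (metis abs_ge_zero abs_le_zero_iff mult_le_0_iff not_le)
      qed
      have "(\<Sum>c\<in>C. Y v c * X c v) = 0" using z by simp
      then have "(\<Sum>l\<in>U. Y v l * X l v) = 0" using rowv[of v] Y0 by simp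
      moreover have "(\<Sum>l\<in>U. Y v l * X l v) = (if v = v then 1 else 0)" using less.prems(1) vU by blast
      ultimately show False by simp
    qed
    define Y' where "Y' i l = Y i l - Y i v * Y v l / Y v v" for i l
    have inv': "\<forall>i\<in>U'. \<forall>k\<in>U'. (\<Sum>l\<in>U'. Y' i l * X l k) = (if i = k then 1 else 0)"
    proof (intro ballI)
      fix i k assume i: "i \<in> U'" and k: "k \<in> U'"
      have iU: "i \<in> U" and kU: "k \<in> U" and kv: "k \<noteq> v" using i k U'_def by auto
      have sr: "(\<Sum>l\<in>U'. Y a l * X l k) = (\<Sum>l\<in>U. Y a l * X l k) - Y a v * X v k" for a
        unfolding U'_def using sum.remove[OF finite vU, of "\<lambda>l. Y a l * X l k"] by simp
      have "(\<Sum>l\<in>U'. Y' i l * X l k) = (\<Sum>l\<in>U'. Y i l * X l k) - Y i v / Y v v * (\<Sum>l\<in>U'. Y v l * X l k)"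
        unfolding Y'_def by (simp add: sum_subtractf sum_distrib_left algebra_simps)
      also have "\<dots> = ((if i = k then 1 else 0) - Y i v * X v k) - Y i v / Y v v * (0 - Y v v * X v k)"
      proof -
        have e1: "(\<Sum>l\<in>U. Y i l * X l k) = (if i = k then 1 else 0)" using less.prems(1) iU kU by blast
        have "(\<Sum>l\<in>U. Y v l * X l k) = (if v = k then 1 else 0)" using less.prems(1) vU kU by blast
        then have e2: "(\<Sum>l\<in>U. Y v l * X l k) = 0" using kv by simp
        show ?thesis unfolding sr e1 e2 by simp
      qed
      also have "\<dots> = (if i = k then 1 else 0)" using Yvv by simp
      finally show "(\<Sum>l\<in>U'. Y' i l * X l k) = (if i = k then 1 else 0)" .
    qed
    have supp': "\<forall>i\<in>U'. \<forall>l\<in>U'. i \<noteq> l \<longrightarrow> Y' i l \<noteq> 0 \<longrightarrow> E i l"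
    proof (intro ballI impI)
      fix i l assume i: "i \<in> U'" and l: "l \<in> U'" and il: "i \<noteq> l" and nz: "Y' i l \<noteq> 0"
      have iU: "i \<in> U" "i \<noteq> v" and lU: "l \<in> U" "l \<noteq> v" using i l U'_def by auto
      show "E i l"
      proof (cases "Y i l = 0")
        case False
        have "\<forall>l\<in>U. i \<noteq> l \<longrightarrow> Y i l \<noteq> 0 \<longrightarrow> E i l" using less.prems(2) iU(1) by blast
        then show ?thesis using False lU il by blast
      next
        case True
        then have "Y i v \<noteq> 0" "Y v l \<noteq> 0" using nz Y'_def by auto
        moreover have "\<forall>l\<in>U. i \<noteq> l \<longrightarrow> Y i l \<noteq> 0 \<longrightarrow> E i l" using less.prems(2) iU(1) by blast
        moreover have "\<forall>l\<in>U. v \<noteq> l \<longrightarrow> Y v l \<noteq> 0 \<longrightarrow> E v l" using less.prems(2) vU by blast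
        ultimately have "E i v" "E v l" using vU lU iU by auto
        then have "E v i" "E v l" using sym by auto
        then show "E i l" using vs iU lU il unfolding simp_in_def by blast
      qed
    qed
    have cardU': "card U' < card U" unfolding U'_def using vU by (meson card_Diff1_less finite)
    have IH: "\<forall>i\<in>U'. \<forall>j\<in>U'. i \<noteq> j \<longrightarrow> \<not> E i j \<longrightarrow> \<bar>X i j\<bar> \<le> \<gamma>"
      using less.hyps[OF cardU' inv' supp'] unfolding \<gamma>_def lam_def by blast
    have vb: "\<And>j. j \<in> U \<Longrightarrow> j \<noteq> v \<Longrightarrow> \<not> E v j \<Longrightarrow> \<bar>X v j\<bar> \<le> \<gamma>"
    proof -
      fix j assume jU: "j \<in> U" and jv: "j \<noteq> v" and nE: "\<not> E v j"
      define y where "y c = Y v c / Y v v" for c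
      have ey: "\<And>k. k \<in> U \<Longrightarrow> k \<noteq> v \<Longrightarrow> (\<Sum>c\<in>C. y c * X c k) = - X v k"
      proof -
        fix k assume "k \<in> U" "k \<noteq> v"
        then have "(\<Sum>l\<in>U. Y v l * X l k) = (if v = k then 1 else 0)" using less.prems(1) vU by blast
        then have "Y v v * X v k + (\<Sum>c\<in>C. Y v c * X c k) = 0" using rowv[of k] \<open>k \<noteq> v\<close> by simp
        then have "(\<Sum>c\<in>C. Y v c * X c k) / Y v v = - X v k" using Yvv by (simp add: field_simps)
        then show "(\<Sum>c\<in>C. y c * X c k) = - X v k" unfolding y_def by (simp add: sum_divide_distrib)
      qed
      have "\<forall>k\<in>C. \<bar>\<Sum>c\<in>C. y c * X c k\<bar> \<le> \<alpha>"
      proof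
        fix k assume kC: "k \<in> C"
        then have "E v k" "k \<noteq> v" using C_def irr by auto
        then show "\<bar>\<Sum>c\<in>C. y c * X c k\<bar> \<le> \<alpha>" using ey[of k] Cv[OF kC] edge by auto
      qed
      from dd[OF finite offC diagC a0 lamC_pos[unfolded lamC_def] this]
      have yb: "\<And>c. c \<in> C \<Longrightarrow> \<bar>y c\<bar> \<le> \<alpha> / lamC" using lamC_pos unfolding lamC_def
        by (simp add: le_divide_eq)
      have Xcj: "\<And>c. c \<in> C \<Longrightarrow> \<bar>X c j\<bar> \<le> \<alpha>"
      proof -
        fix c assume cC: "c \<in> C"
        then have cj: "c \<noteq> j" using nE C_def by auto
        show "\<bar>X c j\<bar> \<le> \<alpha>"
        proof (cases "E c j")
          case True then show ?thesis using edge cj by auto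
        next
          case False
          then have "\<bar>X c j\<bar> \<le> \<gamma>" using IH cC CU jU jv cj U'_def by auto
          then show ?thesis using gam_le by simp
        qed
      qed
      have "\<bar>X v j\<bar> = \<bar>\<Sum>c\<in>C. y c * X c j\<bar>" using ey[OF jU jv] by simp
      also have "\<dots> \<le> (\<Sum>c\<in>C. \<bar>y c * X c j\<bar>)" by (rule sum_abs)
      also have "\<dots> \<le> (\<Sum>c\<in>C. \<alpha> / lamC * \<alpha>)"
      proof (rule sum_mono)
        fix c assume "c \<in> C"
        then show "\<bar>y c * X c j\<bar> \<le> \<alpha> / lamC * \<alpha>"
          unfolding abs_mult using yb Xcj a0 lamC_pos by (intro mult_mono) auto
      qed
      also have "\<dots> = real (card C) * \<alpha>\<^sup>2 / lamC" by (simp add: power2_eq_square)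
      also have "\<dots> \<le> \<gamma>"
      proof -
        have "real (card C) * (1 + \<alpha>) \<le> real w * (1 + \<alpha>)" using cardC a0 by (intro mult_right_mono) auto
        then have "real (card C) * lam \<le> real w * lamC"
          unfolding lam_def lamC_def by (simp add: algebra_simps)
        then have "real (card C) * \<alpha>\<^sup>2 * lam \<le> real w * \<alpha>\<^sup>2 * lamC"
          using mult_right_mono[of "real (card C) * lam" "real w * lamC" "\<alpha>\<^sup>2"] by (simp add: algebra_simps)
        then show ?thesis unfolding \<gamma>_def using lam_pos lamC_pos
          by (simp add: divide_le_eq le_divide_eq mult.commute mult.left_commute)
      qed
      finally show "\<bar>X v j\<bar> \<le> \<gamma>" .
    qed
    show ?thesis
    proof (intro ballI impI)
      fix i j assume i: "i \<in> U" and j: "j \<in> U" and ij: "i \<noteq> j" and nE: "\<not> E i j"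
      show "\<bar>X i j\<bar> \<le> real w * \<alpha>\<^sup>2 / (1 - (real w - 1) * \<alpha>)"
      proof -
        have "\<bar>X i j\<bar> \<le> \<gamma>"
        proof (cases "i = v")
          case True then show ?thesis using vb j ij nE by auto
        next
          case False
          show ?thesis
          proof (cases "j = v")
            case True
            have "\<not> E v i" using nE sym True by auto
            then show ?thesis using vb[of i] i False True Xsym by auto
          next
            case False2: False
            then show ?thesis using IH i j ij nE False U'_def by auto
          qed
        qed
        then show ?thesis unfolding \<gamma>_def lam_def .
      qed
    qed
  qed
qed



lemma max_norm_fin: "finite {\<bar>M $ i $ j\<bar> | i j. i \<noteq> (j::'n::finite)}"
proof -
  have "{\<bar>M $ i $ j\<bar> | i j. i \<noteq> (j::'n::finite)} \<subseteq> (\<lambda>p. \<bar>M $ fst p $ snd p\<bar>) ` UNIV"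
    by (auto intro: image_eqI[where x="(i,j)" for i j])
  then show ?thesis by (rule finite_subset) simp
qed

lemma max_norm_ge: "i \<noteq> j \<Longrightarrow> \<bar>M $ i $ j\<bar> \<le> max_norm (M::real^'n::finite^'n)"
  unfolding max_norm_def using max_norm_fin[of M] by (intro Max_ge) auto

lemma max_norm_nonneg: "0 \<le> max_norm (M::real^'n::finite^'n)"
  unfolding max_norm_def using max_norm_fin[of M] by (intro Max_ge) auto

lemma max_norm_le:
  assumes "0 \<le> B" "\<And>i j. i \<noteq> j \<Longrightarrow> \<bar>M $ i $ j\<bar> \<le> B"
  shows "max_norm (M::real^'n::finite^'n) \<le> B"
  unfolding max_norm_def
proof (rule Max.boundedI)
  show "finite (insert 0 {\<bar>M $ i $ j\<bar> |i j. i \<noteq> j})" using max_norm_fin[of M] by simp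
  show "insert 0 {\<bar>M $ i $ j\<bar> |i j. i \<noteq> j} \<noteq> {}" by simp
  fix a assume "a \<in> insert 0 {\<bar>M $ i $ j\<bar> |i j. i \<noteq> j}"
  then show "a \<le> B" using assms by blast
qed

lemma clique_bound:
  fixes E :: "'n::finite \<Rightarrow> 'n \<Rightarrow> bool"
  assumes "is_clique E K"
  shows "card K \<le> treewidth E + 1"
proof -
  define S where "S = {card C | C. is_clique E C}"
  have fin: "finite S"
  proof -
    have "S \<subseteq> {..CARD('n)}" unfolding S_def
    proof
      fix x assume "x \<in> {card C |C. is_clique E C}"
      then obtain C :: "'n set" where "x = card C" by blast
      then show "x \<in> {..CARD('n)}" using card_mono[OF finite subset_UNIV, of C] by simp
    qed
    then show ?thesis using finite_subset by blast
  qed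
  obtain x :: 'n where True by blast
  have "is_clique E {x}" unfolding is_clique_def by auto
  then have "1 \<in> S" unfolding S_def by force
  then have "Max S \<ge> 1" using fin by (intro Max_ge) auto
  moreover have "card K \<in> S" using assms S_def by blast
  then have "card K \<le> Max S" using fin by (intro Max_ge) auto
  ultimately show ?thesis unfolding treewidth_def S_def[symmetric] by linarith
qed

lemma pd_inv:
  fixes A :: "real^'n::finite^'n"
  assumes "pos_def A"
  shows "matrix_inv A ** A = mat 1"
proof -
  have "\<forall>x. A *v x = 0 \<longrightarrow> x = 0"
  proof (intro allI impI)
    fix x assume "A *v x = 0"
    then have "x \<bullet> (A *v x) = 0" by simp
    then show "x = 0" using assms unfolding pos_def_def by (metis less_irrefl)
  qed
  then have "invertible A" using matrix_left_invertible_ker invertible_left_inverse by blast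
  then have "A ** matrix_inv A = mat 1 \<and> matrix_inv A ** A = mat 1"
    unfolding invertible_def matrix_inv_def by (rule someI_ex)
  then show ?thesis by simp
qed

lemma sym_entry: "sym_mat M \<Longrightarrow> M $ i $ j = M $ j $ i"
proof -
  assume "sym_mat M"
  then have "transpose M $ i $ j = M $ i $ j" unfolding sym_mat_def by simp
  then show ?thesis by (simp add: transpose_def)
qed

theorem theorem2:
  fixes E :: "'n::finite \<Rightarrow> 'n \<Rightarrow> bool" and \<alpha> :: real
  assumes "simple_graph E"
    and "chordal E"
    and "real (treewidth E) \<le> 2 / 3 * (real CARD('n) - 1)"
    and "\<alpha> < 1 / (real (treewidth E) * sqrt (real CARD('n) - real (treewidth E) - 1)
                  + real (treewidth E) - 1)"
  shows "\<forall>b \<in> beta_vals E \<alpha>. b \<le> real (treewidth E) * sqrt (real CARD('n) - real (treewidth E) - 1) * \<alpha>\<^sup>2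
                  / (1 - (real (treewidth E) - 1) * \<alpha>)"
proof
  fix b assume "b \<in> beta_vals E \<alpha>"
  then obtain M N where MN: "inverse_consistent M" "pos_def M" "\<forall>i. M $ i $ i = 1"
    "supp_eq M E" "max_norm M \<le> \<alpha>" "ic_complement M N" and bN: "b = max_norm N"
    unfolding beta_vals_def by blast
  define w where "w = treewidth E"
  define d where "d = CARD('n)"
  define s where "s = sqrt (real d - real w - 1)"
  define lam where "lam = 1 - (real w - 1) * \<alpha>"
  have sym: "\<forall>i j. E i j \<longrightarrow> E j i" and irr: "\<forall>i. \<not> E i i"
    using assms(1) unfolding simple_graph_def by auto
  have a0: "\<alpha> \<ge> 0" using MN(5) max_norm_nonneg[of M] by linarith
  have w1: "w \<ge> 1"
  proof (rule ccontr)
    assume "\<not> w \<ge> 1"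
    then have "w = 0" by simp
    then have "\<alpha> < -1" using assms(4) unfolding w_def by simp
    then show False using a0 by simp
  qed
  have "real w \<le> 2 / 3 * (real d - 1)" using assms(3) unfolding w_def d_def .
  then have "3 * real w \<le> 2 * real d - 2" by simp
  moreover have "real w \<ge> 1" using w1 by simp
  ultimately have "real d - real w - 1 > 0" by linarith
  then have "w + 1 < d" by linarith
  then have "real d - real w - 1 \<ge> 1" by linarith
  then have s1: "s \<ge> 1" unfolding s_def by simp
  have den: "real w * s + real w - 1 \<ge> 2 * real w - 1"
    using s1 w1 mult_left_mono[of 1 s "real w"] by simp
  have denpos: "real w * s + real w - 1 > 0" using den w1 by linarith
  have "\<alpha> * (real w * s + real w - 1) < 1"
    using assms(4) denpos unfolding w_def[symmetric] d_def[symmetric] s_def[symmetric]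
    by (simp add: less_divide_eq algebra_simps)
  moreover have "\<alpha> * (2 * real w - 1) \<le> \<alpha> * (real w * s + real w - 1)"
    using den a0 by (rule mult_left_mono)
  ultimately have wa: "real w * \<alpha> < 1 - (real w - 1) * \<alpha>" by (simp add: algebra_simps)
  have lam_pos: "lam > 0" using wa a0 w1 lam_def by (smt (verit) mult_nonneg_nonneg of_nat_0_le_iff)
  define X where "X i j = (M + N) $ i $ j" for i j
  define Y where "Y i j = matrix_inv (M + N) $ i $ j" for i j
  have icN: "sym_mat N" "\<forall>i. N $ i $ i = 0" "pos_def (M + N)"
    "\<forall>i j. i \<noteq> j \<longrightarrow> N $ i $ j \<noteq> 0 \<longrightarrow> M $ i $ j = 0"
    "\<forall>i j. i \<noteq> j \<longrightarrow> matrix_inv (M + N) $ i $ j \<noteq> 0 \<longrightarrow> M $ i $ j \<noteq> 0"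
    using MN(6) unfolding ic_complement_def by auto
  have symM: "sym_mat M" using MN(1) unfolding inverse_consistent_def by auto
  have diag: "\<forall>i. X i i = 1" using MN(3) icN(2) X_def by simp
  have Xsym: "\<forall>i j. X i j = X j i" using sym_entry[OF symM] sym_entry[OF icN(1)] X_def by simp
  have suppE: "\<And>i j. i \<noteq> j \<Longrightarrow> M $ i $ j \<noteq> 0 \<longleftrightarrow> E i j" using MN(4) unfolding supp_eq_def by blast
  have edge: "\<forall>i j. i \<noteq> j \<longrightarrow> E i j \<longrightarrow> \<bar>X i j\<bar> \<le> \<alpha>"
  proof (intro allI impI)
    fix i j assume ij: "i \<noteq> j" and e: "E i j"
    then have "M $ i $ j \<noteq> 0" using suppE by simp
    then have "N $ i $ j = 0" using icN(4) ij by blast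
    then have "X i j = M $ i $ j" using X_def by simp
    then show "\<bar>X i j\<bar> \<le> \<alpha>" using max_norm_ge[OF ij, of M] MN(5) by simp
  qed
  have cl: "\<forall>K. is_clique E K \<longrightarrow> card K \<le> w + 1" unfolding w_def by (intro allI impI clique_bound)
  have YX: "matrix_inv (M + N) ** (M + N) = mat 1" by (rule pd_inv[OF icN(3)])
  have inv: "\<forall>i\<in>UNIV. \<forall>k\<in>UNIV. (\<Sum>l\<in>UNIV. Y i l * X l k) = (if i = k then 1 else 0)"
  proof (intro ballI)
    fix i k :: 'n
    have "(matrix_inv (M + N) ** (M + N)) $ i $ k = (\<Sum>l\<in>UNIV. Y i l * X l k)"
      unfolding Y_def X_def matrix_matrix_mult_def by simp
    then show "(\<Sum>l\<in>UNIV. Y i l * X l k) = (if i = k then 1 else 0)" using YX by (simp add: mat_def)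
  qed
  have supp: "\<forall>i\<in>UNIV. \<forall>l\<in>UNIV. i \<noteq> l \<longrightarrow> Y i l \<noteq> 0 \<longrightarrow> E i l"
  proof (intro ballI impI)
    fix i l :: 'n assume il: "i \<noteq> l" and "Y i l \<noteq> 0"
    then have "M $ i $ l \<noteq> 0" using icN(5) Y_def by simp
    then show "E i l" using suppE[OF il] by simp
  qed
  have main: "\<forall>i\<in>UNIV. \<forall>j\<in>UNIV. i \<noteq> j \<longrightarrow> \<not> E i j \<longrightarrow> \<bar>X i j\<bar> \<le> real w * \<alpha>\<^sup>2 / (1 - (real w - 1) * \<alpha>)"
    by (rule main_ind[OF sym irr assms(2) diag Xsym edge cl a0 wa inv supp])
  have gB: "real w * \<alpha>\<^sup>2 / lam \<le> real w * s * \<alpha>\<^sup>2 / lam"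
  proof -
    have "real w * \<alpha>\<^sup>2 * 1 \<le> real w * \<alpha>\<^sup>2 * s" using s1 by (intro mult_left_mono) auto
    then show ?thesis using lam_pos by (intro divide_right_mono) (auto simp: algebra_simps)
  qed
  have B0: "0 \<le> real w * s * \<alpha>\<^sup>2 / lam" using lam_pos s1 by simp
  have "max_norm N \<le> real w * s * \<alpha>\<^sup>2 / lam"
  proof (rule max_norm_le[OF B0])
    fix i j :: 'n assume ij: "i \<noteq> j"
    show "\<bar>N $ i $ j\<bar> \<le> real w * s * \<alpha>\<^sup>2 / lam"
    proof (cases "N $ i $ j = 0")
      case True then show ?thesis using B0 by simp
    next
      case False
      then have M0: "M $ i $ j = 0" using icN(4) ij by blast
      then have "\<not> E i j" using suppE[OF ij] by simp
      then have "\<bar>X i j\<bar> \<le> real w * \<alpha>\<^sup>2 / lam" using main ij lam_def by simp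
      moreover have "X i j = N $ i $ j" using M0 X_def by simp
      ultimately show ?thesis using gB by simp
    qed
  qed
  then show "b \<le> real (treewidth E) * sqrt (real CARD('n) - real (treewidth E) - 1) * \<alpha>\<^sup>2
                  / (1 - (real (treewidth E) - 1) * \<alpha>)"
    using bN unfolding w_def d_def s_def lam_def by simp
qed

end
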